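(* Let $S$ be a nonempty set and $X=\ell^{\infty}(S)$ with the sup-norm metric and base point $0$. Then the function identically equal to $0$ is not a metric functional of $X$. In fact, every metric functional of $X$ is an unbounded function.
   Context: For a metric space $(X,d)$ with base point $x_0$, let $\mathrm{Hom}(X,\mathbb{R})$ be the set of $1$-Lipschitz functions $X\to\mathbb{R}$ with the topology of pointwise convergence and $h_y(\cdot)=d(\cdot,y)-d(x_0,y)$ for $y\in X$. Metric functionals are the elements of the closure of $\{h_y:y\in X\}$ in $\mathrm{Hom}(X,\mathbb{R})$. *)

theory Defs
  imports "HOL-Analysis.Analysis"
begin

definition lip1_funs :: "'x set \<Rightarrow> ('x \<Rightarrow> 'x \<Rightarrow> real) \<Rightarrow> ('x \<Rightarrow> real) set" where
  "lip1_funs M d = {f \<in> extensional M. \<forall>x\<in>M. \<forall>y\<in>M. \<bar>f x - f y\<bar> \<le> d x y}"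

definition hfun :: "'x set \<Rightarrow> ('x \<Rightarrow> 'x \<Rightarrow> real) \<Rightarrow> 'x \<Rightarrow> 'x \<Rightarrow> ('x \<Rightarrow> real)" where
  "hfun M d x0 y = restrict (\<lambda>x. d x y - d x0 y) M"

definition metric_functionals :: "'x set \<Rightarrow> ('x \<Rightarrow> 'x \<Rightarrow> real) \<Rightarrow> 'x \<Rightarrow> ('x \<Rightarrow> real) set" where
  "metric_functionals M d x0 =
     (subtopology (product_topology (\<lambda>_. euclideanreal) M) (lip1_funs M d)) closure_of (hfun M d x0 ` M)"

definition linf :: "'a set \<Rightarrow> ('a \<Rightarrow> real) set" where
  "linf S = {f \<in> extensional S. bounded (f ` S)}"

definition linf_dist :: "'a set \<Rightarrow> ('a \<Rightarrow> real) \<Rightarrow> ('a \<Rightarrow> real) \<Rightarrow> real" where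
  "linf_dist S f g = (SUP s\<in>S. \<bar>f s - g s\<bar>)"

definition linf_zero :: "'a set \<Rightarrow> ('a \<Rightarrow> real)" where
  "linf_zero S = restrict (\<lambda>_. 0) S"

end

theory Submission
  imports Defs
begin

lemma linf_bound:
  assumes "y \<in> linf S"
  obtains B where "\<forall>s\<in>S. \<bar>y s\<bar> \<le> B"
proof -
  from assms have "bounded (y ` S)" by (simp add: linf_def)
  then obtain B where "\<forall>z\<in>y ` S. norm z \<le> B" by (auto simp: bounded_iff)
  then show ?thesis using that by auto
qed

lemma const_in_linf: "restrict (\<lambda>_. (t::real)) S \<in> linf S"
  unfolding linf_def by (auto simp: bounded_iff intro!: exI[of _ "\<bar>t\<bar>"])

lemma key_ineq:
  fixes t :: real
  assumes S: "S \<noteq> {}" and y: "y \<in> linf S" and t: "t \<ge> 0"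
  shows "t \<le> max (linf_dist S (restrict (\<lambda>_. t) S) y - linf_dist S (linf_zero S) y)
                   (linf_dist S (restrict (\<lambda>_. -t) S) y - linf_dist S (linf_zero S) y)"
proof -
  obtain B where B: "\<forall>s\<in>S. \<bar>y s\<bar> \<le> B" using linf_bound[OF y] by blast
  define D1 where "D1 = linf_dist S (restrict (\<lambda>_. t) S) y"
  define D2 where "D2 = linf_dist S (restrict (\<lambda>_. -t) S) y"
  have D1: "\<bar>t - y s\<bar> \<le> D1" if "s \<in> S" for s
  proof -
    have "bdd_above ((\<lambda>s. \<bar>restrict (\<lambda>_. t) S s - y s\<bar>) ` S)"
      using B by (intro bdd_aboveI[of _ "\<bar>t\<bar> + B"]) force
    from cSUP_upper[OF that this] show ?thesis using that by (simp add: D1_def linf_dist_def)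
  qed
  have D2: "\<bar>- t - y s\<bar> \<le> D2" if "s \<in> S" for s
  proof -
    have "bdd_above ((\<lambda>s. \<bar>restrict (\<lambda>_. -t) S s - y s\<bar>) ` S)"
      using B by (intro bdd_aboveI[of _ "\<bar>t\<bar> + B"]) force
    from cSUP_upper[OF that this] show ?thesis using that by (simp add: D2_def linf_dist_def)
  qed
  have M: "linf_dist S (linf_zero S) y = (SUP s\<in>S. \<bar>y s\<bar>)"
    unfolding linf_dist_def linf_zero_def
    by (rule SUP_cong) auto
  have "(SUP s\<in>S. \<bar>y s\<bar>) \<le> max D1 D2 - t"
  proof (rule cSUP_least[OF S])
    fix s assume "s \<in> S"
    from D1[OF this] D2[OF this] t show "\<bar>y s\<bar> \<le> max D1 D2 - t" by (auto simp: max_def abs_if split: if_splits)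
  qed
  then show ?thesis unfolding M D1_def[symmetric] D2_def[symmetric] by (auto simp: max_def)
qed

theorem proposition21:
  fixes S :: "'a set"
  assumes "S \<noteq> {}"
  shows "restrict (\<lambda>_. 0) (linf S) \<notin> metric_functionals (linf S) (linf_dist S) (linf_zero S)
     \<and> (\<forall>\<phi> \<in> metric_functionals (linf S) (linf_dist S) (linf_zero S). \<not> bounded (\<phi> ` linf S))"
proof -
  let ?X = "subtopology (product_topology (\<lambda>_. euclideanreal) (linf S)) (lip1_funs (linf S) (linf_dist S))"
  let ?A = "hfun (linf S) (linf_dist S) (linf_zero S) ` linf S"
  have main: "t \<le> max (\<phi> (restrict (\<lambda>_. t) S)) (\<phi> (restrict (\<lambda>_. -t) S))"
    if phi: "\<phi> \<in> metric_functionals (linf S) (linf_dist S) (linf_zero S)" and t: "t \<ge> 0" for \<phi> t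
  proof -
    let ?a = "restrict (\<lambda>_. t) S" and ?b = "restrict (\<lambda>_. -t) S"
    let ?g = "\<lambda>f::('a\<Rightarrow>real)\<Rightarrow>real. max (f ?a) (f ?b)"
    let ?T = "{f \<in> topspace ?X. ?g f \<in> {t..}}"
    have p: "continuous_map (product_topology (\<lambda>_. euclideanreal) (linf S)) euclideanreal (\<lambda>f. f x)"
      if "x \<in> linf S" for x
      using continuous_map_product_projection[OF that, of "\<lambda>_. euclideanreal"] by simp
    have cm: "continuous_map ?X euclideanreal ?g"
      by (intro continuous_map_from_subtopology continuous_map_real_max p const_in_linf)
    have cl: "closedin ?X ?T"
      by (rule closedin_continuous_map_preimage[OF cm]) simp
    have sub: "topspace ?X \<inter> ?A \<subseteq> ?T"
    proof
      fix f assume f: "f \<in> topspace ?X \<inter> ?A"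
      then obtain y where y: "y \<in> linf S" "f = hfun (linf S) (linf_dist S) (linf_zero S) y" by auto
      have "?g f = max (linf_dist S ?a y - linf_dist S (linf_zero S) y)
                   (linf_dist S ?b y - linf_dist S (linf_zero S) y)"
        using y by (simp add: hfun_def const_in_linf)
      then have "t \<le> ?g f" using key_ineq[OF assms y(1) t] by linarith
      moreover have "f \<in> topspace ?X" using f by (rule IntD1)
      ultimately show "f \<in> ?T" by (intro CollectI conjI) auto
    qed
    have "?X closure_of ?A = ?X closure_of (topspace ?X \<inter> ?A)"
      by (rule closure_of_restrict)
    also have "\<dots> \<subseteq> ?T" by (rule closure_of_minimal[OF sub cl])
    finally have "\<phi> \<in> ?T" using phi by (auto simp: metric_functionals_def)
    then show ?thesis by simp
  qed
  have unb: "\<not> bounded (\<phi> ` linf S)"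
    if phi: "\<phi> \<in> metric_functionals (linf S) (linf_dist S) (linf_zero S)" for \<phi>
  proof
    assume "bounded (\<phi> ` linf S)"
    then obtain B where B: "\<forall>x\<in>linf S. \<bar>\<phi> x\<bar> \<le> B" by (auto simp: bounded_iff)
    have "B + 1 \<le> max (\<phi> (restrict (\<lambda>_. B + 1) S)) (\<phi> (restrict (\<lambda>_. -(B + 1)) S))"
      using B const_in_linf by (intro main[OF phi]) force
    moreover have "\<bar>\<phi> (restrict (\<lambda>_. B + 1) S)\<bar> \<le> B" "\<bar>\<phi> (restrict (\<lambda>_. -(B + 1)) S)\<bar> \<le> B"
      using B const_in_linf by blast+
    ultimately show False by auto
  qed
  have "bounded (restrict (\<lambda>_. 0::real) (linf S) ` linf S)"
    by (auto simp: bounded_iff intro!: exI[of _ 0])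
  with unb show ?thesis by blast
qed

end
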